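(* For any parsimonious protocol $\Pi$ on $M=\{1,\dots,m\}$, \[\mu_m^H(\Pi)\,\mu_1^L(\Pi)\le\gamma^{m-2}\,\mu_1^H(\Pi)\,\mu_m^L(\Pi).\] Furthermore, if $m\ge4$ and $\mu_i^\theta(\Pi)\neq0$ for all $i\in\{1,m\}$ and $\theta\in\{H,L\}$, the inequality is strict.
   Context: Setting. The state of nature is $\theta\in\{H,L\}$. $S$ is a finite signal set; conditional on $\theta$, signals are i.i.d. with distribution $\pi_\theta$ on $S$, where $\pi_\theta(s)>0$ for all $s,\theta$, and $\pi_H\neq\pi_L$. A receiver protocol on memory states $M=\{1,\dots,m\}$ is $\Pi=(f,g,a)$ with transition function $f:M\times S\to\Delta(M)$ ($f(i,s)(j)$ the probability of moving from $i$ to $j$ after signal $s$), initial distribution $g\in\Delta(M)$ and action rule $a:M\to[0,1]$ (probability of action $H$). Absorbing/transient refer to the Markov chain on $M$ induced by $f$ with signals drawn i.i.d. from $\pi_\theta$ (by full support this classification does not depend on $\theta$). A protocol is parsimonious if (i) it has exactly two absorbing memory states, one with $a=0$ and one with $a=1$, and (ii) all other memory states are transient with $a=0$. For a parsimonious protocol, label the absorbing state with $a=0$ as $1$ and the one with $a=1$ as $m$, and let $\mu_1^\theta(\Pi),\mu_m^\theta(\Pi)$ be the probabilities that this Markov chain, started from $m_0\sim g$ with signals drawn from $\pi_\theta$, is absorbed in $1$ and in $m$ respectively (the sender never stops; $\mu_1^\theta+\mu_m^\theta=1$). $\bar\ell=\max_{s}\pi_H(s)/\pi_L(s)$, $\underline\ell=\min_{s}\pi_H(s)/\pi_L(s)$,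 $\gamma=\bar\ell/\underline\ell\in(1,\infty)$. *)

theory Defs
  imports "HOL-Analysis.Analysis"
begin

text \<open>Memory states are the naturals 1..m. A transition function is
  f :: nat => 's => nat => real, with f i s j the probability of moving from i to j
  after signal s.\<close>

definition is_signal_dist :: "('s::finite \<Rightarrow> real) \<Rightarrow> bool" where
  "is_signal_dist p \<longleftrightarrow> (\<forall>s. p s > 0) \<and> (\<Sum>s\<in>UNIV. p s) = 1"

definition valid_protocol ::
  "nat \<Rightarrow> (nat \<Rightarrow> 's \<Rightarrow> nat \<Rightarrow> real) \<Rightarrow> (nat \<Rightarrow> real) \<Rightarrow> (nat \<Rightarrow> real) \<Rightarrow> bool" where
  "valid_protocol m f g a \<longleftrightarrow>
     (\<forall>i\<in>{1..m}. \<forall>s. (\<forall>j\<in>{1..m}. f i s j \<ge> 0) \<and> (\<Sum>j\<in>{1..m}. f i s j) = 1) \<and>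
     (\<forall>i\<in>{1..m}. g i \<ge> 0) \<and> (\<Sum>i\<in>{1..m}. g i) = 1 \<and>
     (\<forall>i\<in>{1..m}. 0 \<le> a i \<and> a i \<le> 1)"

definition kernel :: "('s::finite \<Rightarrow> real) \<Rightarrow> (nat \<Rightarrow> 's \<Rightarrow> nat \<Rightarrow> real) \<Rightarrow> nat \<Rightarrow> nat \<Rightarrow> real" where
  "kernel p f i j = (\<Sum>s\<in>UNIV. p s * f i s j)"

definition edge :: "nat \<Rightarrow> ('s::finite \<Rightarrow> real) \<Rightarrow> (nat \<Rightarrow> 's \<Rightarrow> nat \<Rightarrow> real) \<Rightarrow> nat \<Rightarrow> nat \<Rightarrow> bool" where
  "edge m p f i j \<longleftrightarrow> i \<in> {1..m} \<and> j \<in> {1..m} \<and> kernel p f i j > 0"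

definition absorbing :: "nat \<Rightarrow> ('s::finite \<Rightarrow> real) \<Rightarrow> (nat \<Rightarrow> 's \<Rightarrow> nat \<Rightarrow> real) \<Rightarrow> nat \<Rightarrow> bool" where
  "absorbing m p f i \<longleftrightarrow> i \<in> {1..m} \<and> kernel p f i i = 1"

definition transient :: "nat \<Rightarrow> ('s::finite \<Rightarrow> real) \<Rightarrow> (nat \<Rightarrow> 's \<Rightarrow> nat \<Rightarrow> real) \<Rightarrow> nat \<Rightarrow> bool" where
  "transient m p f i \<longleftrightarrow> i \<in> {1..m} \<and>
     (\<exists>j. (edge m p f)\<^sup>*\<^sup>* i j \<and> \<not> (edge m p f)\<^sup>*\<^sup>* j i)"

definition parsimonious ::
  "nat \<Rightarrow> ('s::finite \<Rightarrow> real) \<Rightarrow> (nat \<Rightarrow> 's \<Rightarrow> nat \<Rightarrow> real) \<Rightarrow> (nat \<Rightarrow> real) \<Rightarrow> bool" where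
  "parsimonious m p f a \<longleftrightarrow>
     (\<exists>i0 i1. i0 \<noteq> i1 \<and> {i\<in>{1..m}. absorbing m p f i} = {i0, i1} \<and> a i0 = 0 \<and> a i1 = 1) \<and>
     (\<forall>i\<in>{1..m}. \<not> absorbing m p f i \<longrightarrow> transient m p f i \<and> a i = 0)"

fun state_dist :: "nat \<Rightarrow> ('s::finite \<Rightarrow> real) \<Rightarrow> (nat \<Rightarrow> 's \<Rightarrow> nat \<Rightarrow> real) \<Rightarrow> (nat \<Rightarrow> real) \<Rightarrow> nat \<Rightarrow> nat \<Rightarrow> real" where
  "state_dist m p f g 0 j = g j"
| "state_dist m p f g (Suc n) j = (\<Sum>i\<in>{1..m}. state_dist m p f g n i * kernel p f i j)"

definition absorb_prob :: "nat \<Rightarrow> ('s::finite \<Rightarrow> real) \<Rightarrow> (nat \<Rightarrow> 's \<Rightarrow> nat \<Rightarrow> real) \<Rightarrow> (nat \<Rightarrow> real) \<Rightarrow> nat \<Rightarrow> real" where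
  "absorb_prob m p f g j = lim (\<lambda>n. state_dist m p f g n j)"

definition gamma :: "('s::finite \<Rightarrow> real) \<Rightarrow> ('s \<Rightarrow> real) \<Rightarrow> real" where
  "gamma pH pL = Max (range (\<lambda>s. pH s / pL s)) / Min (range (\<lambda>s. pH s / pL s))"

end

theory Submission
  imports Defs
begin


definition OUTf :: "nat \<Rightarrow> (nat\<Rightarrow>real) \<Rightarrow> (nat\<Rightarrow>real) \<Rightarrow> (nat\<Rightarrow>nat\<Rightarrow>real) \<Rightarrow> nat set \<Rightarrow> real" where
  "OUTf m g w K S = (\<Sum>i\<in>({1..m}-{1,m})\<inter>S. \<Sum>j\<in>{1..m}-S. w i * K i j) + w m * sum g ({1..m}-S)"

definition INf :: "nat \<Rightarrow> (nat\<Rightarrow>real) \<Rightarrow> (nat\<Rightarrow>real) \<Rightarrow> (nat\<Rightarrow>nat\<Rightarrow>real) \<Rightarrow> nat set \<Rightarrow> real" where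
  "INf m g w K S = (\<Sum>i\<in>({1..m}-{1,m})-S. \<Sum>j\<in>S. w i * K i j) + w 1 * sum g S"

locale ratio_ctx =
  fixes m :: nat and g wH wL :: "nat \<Rightarrow> real" and KH KL :: "nat \<Rightarrow> nat \<Rightarrow> real" and lo hi :: real
  assumes m2: "2 \<le> m" and lo0: "0 < lo" and lo1: "lo < 1" and hi1: "1 < hi"
  and g0: "\<forall>j\<in>{1..m}. 0 \<le> g j" and g1: "sum g {1..m} = 1"
  and wL0: "\<forall>i\<in>{1..m}. 0 \<le> wL i" and wH0: "\<forall>i\<in>{1..m}. 0 \<le> wH i"
  and supp: "\<forall>i\<in>{1..m}. 0 < wH i \<longleftrightarrow> 0 < wL i"
  and wL1: "0 < wL 1" and wLm: "0 < wL m"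
  and Kb: "\<forall>i\<in>{1..m}-{1,m}. \<forall>j\<in>{1..m}. 0 \<le> KL i j \<and> lo * KL i j \<le> KH i j \<and> KH i j \<le> hi * KL i j"
  and balH: "\<forall>S. S \<subseteq> {1..m} \<longrightarrow> m \<in> S \<longrightarrow> 1 \<notin> S \<longrightarrow> OUTf m g wH KH S = INf m g wH KH S"
  and balL: "\<forall>S. S \<subseteq> {1..m} \<longrightarrow> m \<in> S \<longrightarrow> 1 \<notin> S \<longrightarrow> OUTf m g wL KL S = INf m g wL KL S"
begin

definition rho :: "nat \<Rightarrow> real" where "rho i = wH i / wL i"

lemma rho_eq: "i \<in> {1..m} \<Longrightarrow> wH i = rho i * wL i"
proof -
  assume i: "i \<in> {1..m}"
  show ?thesis
  proof (cases "wL i = 0")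
    case True
    with supp i wH0 have "wH i = 0" by force
    with True show ?thesis by (simp add: rho_def)
  next
    case False thus ?thesis by (simp add: rho_def)
  qed
qed

lemma rho_nonneg: "i \<in> {1..m} \<Longrightarrow> 0 \<le> rho i"
  using wL0 wH0 by (simp add: rho_def)

lemma rho1: "0 < rho 1" and rhom: "0 < rho m"
  using wL1 wLm supp m2 by (auto simp: rho_def)

lemma gsplit: "S \<subseteq> {1..m} \<Longrightarrow> sum g S + sum g ({1..m} - S) = 1"
  using g1 by (metis finite_atLeastAtMost sum.subset_diff add.commute)

lemma out_diff: "OUTf m g wH KH S - x * OUTf m g wL KL S =
   (\<Sum>i\<in>({1..m}-{1,m})\<inter>S. \<Sum>j\<in>{1..m}-S. wH i * KH i j - x * (wL i * KL i j)) + (wH m - x * wL m) * sum g ({1..m}-S)"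
  unfolding OUTf_def by (simp add: sum_subtractf sum_distrib_left algebra_simps)

lemma in_diff: "INf m g wH KH S - x * INf m g wL KL S =
   (\<Sum>i\<in>({1..m}-{1,m})-S. \<Sum>j\<in>S. wH i * KH i j - x * (wL i * KL i j)) + (wH 1 - x * wL 1) * sum g S"
  unfolding INf_def by (simp add: sum_subtractf sum_distrib_left algebra_simps)

lemma term_lo: "i \<in> {1..m}-{1,m} \<Longrightarrow> j \<in> {1..m} \<Longrightarrow> lo * rho i * (wL i * KL i j) \<le> wH i * KH i j"
proof -
  assume i: "i \<in> {1..m}-{1,m}" and j: "j \<in> {1..m}"
  have "wH i * KH i j = rho i * wL i * KH i j" using rho_eq i by simp
  moreover have "rho i * wL i * (lo * KL i j) \<le> rho i * wL i * KH i j"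
    using Kb i j rho_nonneg[of i] wL0 i by (intro mult_left_mono) auto
  ultimately show ?thesis by (metis mult.commute mult.left_commute)
qed

lemma term_hi: "i \<in> {1..m}-{1,m} \<Longrightarrow> j \<in> {1..m} \<Longrightarrow> wH i * KH i j \<le> hi * rho i * (wL i * KL i j)"
proof -
  assume i: "i \<in> {1..m}-{1,m}" and j: "j \<in> {1..m}"
  have "wH i * KH i j = rho i * wL i * KH i j" using rho_eq i by simp
  moreover have "rho i * wL i * KH i j \<le> rho i * wL i * (hi * KL i j)"
    using Kb i j rho_nonneg[of i] wL0 i by (intro mult_left_mono) auto
  ultimately show ?thesis by (metis mult.commute mult.left_commute)
qed

lemma KL0: "i \<in> {1..m}-{1,m} \<Longrightarrow> j \<in> {1..m} \<Longrightarrow> 0 \<le> wL i * KL i j"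
  using Kb wL0 by auto

lemma OUTL_pos: "S \<subseteq> {1..m} \<Longrightarrow> m \<in> S \<Longrightarrow> 1 \<notin> S \<Longrightarrow> 0 < OUTf m g wL KL S"
proof -
  assume S: "S \<subseteq> {1..m}" "m \<in> S" "1 \<notin> S"
  have a: "0 \<le> (\<Sum>i\<in>({1..m}-{1,m})\<inter>S. \<Sum>j\<in>{1..m}-S. wL i * KL i j)"
    using KL0 by (intro sum_nonneg) auto
  have b: "0 \<le> (\<Sum>i\<in>({1..m}-{1,m})-S. \<Sum>j\<in>S. wL i * KL i j)"
    using KL0 S by (intro sum_nonneg) auto
  have gs: "0 \<le> sum g S" "0 \<le> sum g ({1..m}-S)" using g0 S by (auto intro!: sum_nonneg)
  have "OUTf m g wL KL S = INf m g wL KL S" using balL S by auto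
  moreover have "OUTf m g wL KL S \<ge> wL m * sum g ({1..m}-S)" using a unfolding OUTf_def by simp
  moreover have "INf m g wL KL S \<ge> wL 1 * sum g S" using b unfolding INf_def by simp
  moreover have "sum g S > 0 \<or> sum g ({1..m}-S) > 0" using gsplit[OF S(1)] gs by linarith
  ultimately show ?thesis using wL1 wLm gs
    by (smt (verit, best) mult_pos_pos)
qed

definition gam :: real where "gam = hi / lo"

lemma hi_le_gam: "hi < gam" using lo0 lo1 hi1 by (simp add: less_divide_eq gam_def)
lemma gam1: "1 < gam" using hi_le_gam hi1 by simp
lemma inv_lo_le_gam: "1 / lo \<le> gam" using lo0 hi1 by (simp add: divide_right_mono gam_def)

lemma step_strict:
  assumes c: "0 < c" "rho 1 \<le> c" and S: "S = {i\<in>{1..m}. c < rho i}" and mS: "m \<in> S"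
  shows "\<exists>j\<in>S. rho j < gam * c"
proof (rule ccontr)
  assume "\<not> ?thesis"
  hence big: "\<And>j. j \<in> S \<Longrightarrow> gam * c \<le> rho j" by force
  have Ssub: "S \<subseteq> {1..m}" and n1: "1 \<notin> S" using S c by auto
  let ?x = "hi * c"
  have o1: "0 \<le> (\<Sum>i\<in>({1..m}-{1,m})\<inter>S. \<Sum>j\<in>{1..m}-S. wH i * KH i j - ?x * (wL i * KL i j))"
  proof (intro sum_nonneg)
    fix i j assume i: "i \<in> ({1..m}-{1,m})\<inter>S" and j: "j \<in> {1..m}-S"
    have "?x * (wL i * KL i j) \<le> lo * rho i * (wL i * KL i j)"
    proof (rule mult_right_mono)
      have "lo * (gam * c) \<le> lo * rho i" using big[of i] i lo0 by (intro mult_left_mono) auto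
      thus "?x \<le> lo * rho i" using lo0 by (simp add: gam_def)
    qed (use KL0 i j in auto)
    also have "\<dots> \<le> wH i * KH i j" using term_lo i j by auto
    finally show "0 \<le> wH i * KH i j - ?x * (wL i * KL i j)" by simp
  qed
  have i1: "(\<Sum>i\<in>({1..m}-{1,m})-S. \<Sum>j\<in>S. wH i * KH i j - ?x * (wL i * KL i j)) \<le> 0"
  proof (intro sum_nonpos)
    fix i j assume i: "i \<in> ({1..m}-{1,m})-S" and j: "j \<in> S"
    have "wH i * KH i j \<le> hi * rho i * (wL i * KL i j)" using term_hi i j Ssub by auto
    also have "\<dots> \<le> ?x * (wL i * KL i j)"
    proof (rule mult_right_mono)
      have "rho i \<le> c" using i S by auto
      thus "hi * rho i \<le> ?x" using hi1 by simp
    qed (use KL0 i j Ssub in auto)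
    finally show "wH i * KH i j - ?x * (wL i * KL i j) \<le> 0" by simp
  qed
  have eq: "OUTf m g wH KH S - ?x * OUTf m g wL KL S = INf m g wH KH S - ?x * INf m g wL KL S"
    using balH balL Ssub mS n1 by auto
  have A: "0 < (rho m - ?x) * wL m"
  proof -
    have "gam * c \<le> rho m" using big mS by auto
    moreover have "hi * c < gam * c" using mult_strict_right_mono[OF hi_le_gam c(1)] .
    ultimately show ?thesis using wLm by simp
  qed
  have B: "0 < (?x - rho 1) * wL 1"
  proof -
    have "c < hi * c" using hi1 c by simp
    hence "0 < ?x - rho 1" using c by linarith
    thus ?thesis using wL1 by simp
  qed
  have "(rho m - ?x) * wL m * sum g ({1..m}-S) \<le> (rho 1 - ?x) * wL 1 * sum g S"
    using eq o1 i1 unfolding out_diff in_diff using rho_eq[of m] rho_eq[of 1] m2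
    by (simp add: algebra_simps)
  moreover have gs: "0 \<le> sum g S" "0 \<le> sum g ({1..m}-S)" using g0 Ssub by (auto intro!: sum_nonneg)
  moreover have "sum g S + sum g ({1..m} - S) = 1" using gsplit Ssub by auto
  ultimately have "(rho m - ?x) * wL m * sum g ({1..m}-S) + (?x - rho 1) * wL 1 * sum g S \<le> 0"
    and gs': "0 \<le> sum g S" "0 \<le> sum g ({1..m}-S)" "sum g S + sum g ({1..m} - S) = 1"
    by (simp_all add: algebra_simps)
  moreover have "0 \<le> (rho m - ?x) * wL m * sum g ({1..m}-S)" using A gs' by simp
  moreover have "0 \<le> (?x - rho 1) * wL 1 * sum g S" using B gs' by simp
  ultimately have "(rho m - ?x) * wL m * sum g ({1..m}-S) = 0" "(?x - rho 1) * wL 1 * sum g S = 0"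
    by linarith+
  hence "sum g ({1..m}-S) = 0" "sum g S = 0" using A B by (metis mult_eq_0_iff less_irrefl)+
  thus False using gs' by simp
qed

lemma step_ref:
  assumes c: "0 < c" "rho 1 \<le> c" and S: "S = {i\<in>{1..m}. c < rho i}" and mS: "m \<in> S"
  and al: "al = (if ({1..m}-{1,m}) \<inter> S = {} then 1 else lo)"
  and be: "be = (if \<forall>i\<in>({1..m}-{1,m})-S. wL i = 0 then 1 else hi)"
  shows "\<exists>j\<in>S. al * rho j \<le> be * c"
proof -
  have Ssub: "S \<subseteq> {1..m}" and n1: "1 \<notin> S" using S c by auto
  have fin: "finite S" using Ssub finite_subset by blast
  define r where "r = Min (rho ` S)"
  have "r \<in> rho ` S" unfolding r_def using fin mS by (intro Min_in) auto
  then obtain j where j: "j \<in> S" "rho j = r" by auto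
  have rle: "\<And>i. i \<in> S \<Longrightarrow> r \<le> rho i" unfolding r_def using fin by auto
  have r0: "0 < r" using j S c by auto
  have al1: "al \<le> 1" "0 < al" using al lo0 lo1 by auto
  have be1: "1 \<le> be" using be hi1 by auto
  let ?x = "al * r"
  have o1: "0 \<le> (\<Sum>i\<in>({1..m}-{1,m})\<inter>S. \<Sum>j\<in>{1..m}-S. wH i * KH i j - ?x * (wL i * KL i j))"
  proof (intro sum_nonneg)
    fix i j assume i: "i \<in> ({1..m}-{1,m})\<inter>S" and j: "j \<in> {1..m}-S"
    have alo: "al = lo" using al i by auto
    have "?x * (wL i * KL i j) \<le> lo * rho i * (wL i * KL i j)"
    proof (rule mult_right_mono)
      show "?x \<le> lo * rho i" using alo rle[of i] i lo0 by (simp add: mult_left_mono)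
    qed (use KL0 i j in auto)
    also have "\<dots> \<le> wH i * KH i j" using term_lo i j by auto
    finally show "0 \<le> wH i * KH i j - ?x * (wL i * KL i j)" by simp
  qed
  have o2: "0 \<le> (wH m - ?x * wL m) * sum g ({1..m}-S)"
  proof (rule mult_nonneg_nonneg)
    have "?x \<le> r" using al1 r0 by (simp add: mult_left_le_one_le)
    also have "r \<le> rho m" using rle mS by auto
    finally have "0 \<le> (rho m - ?x) * wL m" using wLm by simp
    thus "0 \<le> wH m - ?x * wL m" using rho_eq[of m] m2 by (simp add: algebra_simps)
    show "0 \<le> sum g ({1..m}-S)" using g0 by (auto intro!: sum_nonneg)
  qed
  let ?y = "be * c"
  have i1: "(\<Sum>i\<in>({1..m}-{1,m})-S. \<Sum>j\<in>S. wH i * KH i j - ?y * (wL i * KL i j)) \<le> 0"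
  proof (intro sum_nonpos)
    fix i j assume i: "i \<in> ({1..m}-{1,m})-S" and j: "j \<in> S"
    show "wH i * KH i j - ?y * (wL i * KL i j) \<le> 0"
    proof (cases "wL i = 0")
      case True
      hence "wH i = 0" using rho_eq[of i] i by simp
      thus ?thesis using True by simp
    next
      case False
      hence beh: "be = hi" using be i by auto
      have "wH i * KH i j \<le> hi * rho i * (wL i * KL i j)" using term_hi i j Ssub by auto
      also have "\<dots> \<le> ?y * (wL i * KL i j)"
      proof (rule mult_right_mono)
        have "rho i \<le> c" using i S by auto
        thus "hi * rho i \<le> ?y" using hi1 beh by simp
      qed (use KL0 i j Ssub in auto)
      finally show ?thesis by simp
    qed
  qed
  have i2: "(wH 1 - ?y * wL 1) * sum g S \<le> 0"
  proof (rule mult_nonpos_nonneg)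
    have "c \<le> be * c" using mult_right_mono[OF be1, of c] c by simp
    hence "rho 1 \<le> ?y" using c by linarith
    hence "(rho 1 - ?y) * wL 1 \<le> 0" using wL1 by (simp add: mult_nonpos_nonneg)
    thus "wH 1 - ?y * wL 1 \<le> 0" using rho_eq[of 1] m2 by (simp add: algebra_simps)
    show "0 \<le> sum g S" using g0 Ssub by (auto intro!: sum_nonneg)
  qed
  have "0 \<le> OUTf m g wH KH S - ?x * OUTf m g wL KL S" unfolding out_diff using o1 o2 by simp
  moreover have "INf m g wH KH S - ?y * INf m g wL KL S \<le> 0" unfolding in_diff using i1 i2 by simp
  moreover have "OUTf m g wH KH S = INf m g wH KH S" "OUTf m g wL KL S = INf m g wL KL S"
    using balH balL Ssub mS n1 by auto
  ultimately have "?x * OUTf m g wL KL S \<le> ?y * OUTf m g wL KL S" by simp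
  hence "?x \<le> ?y" using OUTL_pos[OF Ssub mS n1] by simp
  thus ?thesis using j by auto
qed

lemma chainG:
  "\<forall>c. 0 < c \<longrightarrow> rho 1 \<le> c \<longrightarrow> card {i\<in>{1..m}. c < rho i} = k \<longrightarrow>
     rho m \<le> c * hi * gam ^ (k - 1) \<and> (2 \<le> k \<longrightarrow> rho m < c * hi * gam ^ (k - 1))"
proof (induction k rule: less_induct)
  case (less k)
  show ?case
  proof (intro allI impI)
    fix c :: real assume c: "0 < c" "rho 1 \<le> c" and k: "card {i\<in>{1..m}. c < rho i} = k"
    define S where "S = {i\<in>{1..m}. c < rho i}"
    have g1': "1 \<le> gam ^ (k - 1)" using gam1 by (intro one_le_power) simp
    have chi: "c < c * hi" using c hi1 by simp
    also have "\<dots> = c * hi * 1" by simp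
    also have "\<dots> \<le> c * hi * gam ^ (k - 1)" using c hi1 by (intro mult_left_mono[OF g1']) simp
    finally have chi2: "c < c * hi * gam ^ (k - 1)" .
    show "rho m \<le> c * hi * gam ^ (k - 1) \<and> (2 \<le> k \<longrightarrow> rho m < c * hi * gam ^ (k - 1))"
    proof (cases "rho m \<le> c")
      case True thus ?thesis using chi2 by simp
    next
      case False
      hence mS: "m \<in> S" unfolding S_def using m2 by auto
      have finS: "finite S" unfolding S_def by simp
      have kS: "card S = k" using k S_def by simp
      have "0 < card S" using finS mS by (auto simp: card_gt_0_iff)
      hence k1: "1 \<le> k" using kS by simp
      show ?thesis
      proof (cases "k = 1")
        case True
        hence "card S = 1" using kS by simp
        then obtain z where "S = {z}" by (rule card_1_singletonE)
        hence Sm: "S = {m}" using mS by simp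
        have "({1..m}-{1,m}) \<inter> S = {}" using Sm by auto
        then obtain j where "j \<in> S" "1 * rho j \<le> (if \<forall>i\<in>({1..m}-{1,m})-S. wL i = 0 then 1 else hi) * c"
          using step_ref[OF c S_def mS refl refl] by auto
        moreover have "(if \<forall>i\<in>({1..m}-{1,m})-S. wL i = 0 then 1 else hi) * c \<le> hi * c"
          using hi1 c by auto
        ultimately have "rho m \<le> hi * c" using Sm by auto
        thus ?thesis using True by (simp add: mult.commute)
      next
        case False
        hence k2: "2 \<le> k" using k1 by simp
        obtain j where j: "j \<in> S" "rho j < gam * c" using step_strict[OF c S_def mS] by auto
        define c' where "c' = rho j"
        have cc': "c < c'" using j S_def c'_def by auto
        define k' where "k' = card {i\<in>{1..m}. c' < rho i}"
        have sub: "{i\<in>{1..m}. c' < rho i} \<subset> S" using cc' j c'_def S_def by auto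
        have "k' < k" unfolding k'_def kS[symmetric] using finS sub by (rule psubset_card_mono)
        hence IH0: "\<forall>c. 0 < c \<longrightarrow> rho 1 \<le> c \<longrightarrow> card {i\<in>{1..m}. c < rho i} = k' \<longrightarrow>
           rho m \<le> c * hi * gam ^ (k' - 1) \<and> (2 \<le> k' \<longrightarrow> rho m < c * hi * gam ^ (k' - 1))"
          by (rule less.IH)
        have "0 < c'" "rho 1 \<le> c'" using cc' c by auto
        hence IH: "rho m \<le> c' * hi * gam ^ (k' - 1)"
          using IH0 k'_def by blast
        have "gam ^ (k' - 1) \<le> gam ^ (k - 2)"
          using less_imp_le[OF gam1] \<open>k' < k\<close> k2 by (intro power_increasing) simp_all
        hence "c' * hi * gam ^ (k' - 1) \<le> c' * hi * gam ^ (k - 2)"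
          proof (rule mult_left_mono)
          show "0 \<le> c' * hi" using cc' c hi1 by simp
        qed
        also have "\<dots> < gam * c * hi * gam ^ (k - 2)"
          proof (rule mult_strict_right_mono)
          have "c' * hi < gam * c * hi" using j c'_def hi1 by (intro mult_strict_right_mono) simp_all
          thus "c' * hi < gam * c * hi" .
          show "0 < gam ^ (k - 2)" using gam1 by simp
        qed
        also have "\<dots> = c * hi * gam ^ (k - 1)"
        proof -
          have "k - 1 = Suc (k - 2)" using k2 by simp
          thus ?thesis by (simp only: power_Suc) (simp add: algebra_simps)
        qed
        finally show ?thesis using IH by auto
      qed
    qed
  qed
qed

lemma gam_pow_Suc: "1 \<le> k \<Longrightarrow> gam * gam ^ (k - 1) = gam ^ k"
  by (metis Suc_diff_le diff_Suc_1 power_Suc)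

lemma rho_main: "rho m \<le> gam ^ (m - 2) * rho 1 \<and> (4 \<le> m \<longrightarrow> rho m < gam ^ (m - 2) * rho 1)"
proof -
  have r1: "0 < rho 1" by (rule rho1)
  have gpos: "0 < gam" using gam1 by simp
  have pw: "\<And>a b. a \<le> b \<Longrightarrow> gam ^ a \<le> gam ^ b" using less_imp_le[OF gam1] by (simp add: power_increasing)
  have pws: "\<And>a b. a < b \<Longrightarrow> gam ^ a < gam ^ b" using gam1 by (simp add: power_strict_increasing)
  define S0 where "S0 = {i\<in>{1..m}. rho 1 < rho i}"
  define k0 where "k0 = card S0"
  have finS0: "finite S0" unfolding S0_def by simp
  have S0sub: "S0 \<subseteq> {1..m} - {1}" unfolding S0_def by auto
  have "card ({1..m} - {1::nat}) = m - 1" using m2 by simp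
  hence k0m: "k0 \<le> m - 1" unfolding k0_def using S0sub by (metis card_mono finite_Diff finite_atLeastAtMost)
  show ?thesis
  proof (cases "rho m \<le> rho 1")
    case True
    have "rho 1 \<le> gam ^ (m - 2) * rho 1" using r1 pw[of 0 "m-2"] by simp
    moreover have "4 \<le> m \<Longrightarrow> rho 1 < gam ^ (m - 2) * rho 1" using r1 pws[of 0 "m-2"] by simp
    ultimately show ?thesis using True by auto
  next
    case False
    hence mS0: "m \<in> S0" unfolding S0_def using m2 by auto
    have "0 < k0" unfolding k0_def using finS0 mS0 by (auto simp: card_gt_0_iff)
    hence k01: "1 \<le> k0" by simp
    have G0: "rho m \<le> rho 1 * hi * gam ^ (k0 - 1)"
      using chainG[of k0] r1 k0_def S0_def by auto
    show ?thesis
    proof (cases "\<exists>i\<in>({1..m}-{1,m})-S0. wL i \<noteq> 0")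
      case True
      then obtain i where i: "i \<in> ({1..m}-{1,m})-S0" by blast
      have "S0 \<subseteq> {1..m} - {1, i}" using S0sub i by auto
      moreover have "card ({1..m} - {1, i}) = m - 2" using i m2 by (simp add: card_Diff_subset)
      ultimately have k0m2: "k0 \<le> m - 2" unfolding k0_def by (metis card_mono finite_Diff finite_atLeastAtMost)
      have "rho 1 * hi * gam ^ (k0 - 1) < rho 1 * gam * gam ^ (k0 - 1)"
      proof (rule mult_strict_right_mono)
        show "rho 1 * hi < rho 1 * gam" using hi_le_gam r1 by (rule mult_strict_left_mono)
        show "0 < gam ^ (k0 - 1)" using gpos by simp
      qed
      also have "\<dots> = rho 1 * gam ^ k0" by (simp only: mult.assoc gam_pow_Suc[OF k01])
      also have "\<dots> \<le> rho 1 * gam ^ (m - 2)" using pw[OF k0m2] r1 by simp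
      finally show ?thesis using G0 by (simp add: mult.commute)
    next
      case False
      hence b1: "(if \<forall>i\<in>({1..m}-{1,m})-S0. wL i = 0 then 1 else hi) = 1" by auto
      obtain j where j: "j \<in> S0" "(if ({1..m}-{1,m}) \<inter> S0 = {} then 1 else lo) * rho j \<le> 1 * rho 1"
        using step_ref[OF r1 order_refl S0_def mS0 refl refl] b1 by auto
      have rj: "rho 1 < rho j" using j S0_def by auto
      have TS: "({1..m}-{1,m}) \<inter> S0 \<noteq> {}"
      proof
        assume "({1..m}-{1,m}) \<inter> S0 = {}"
        thus False using j rj by simp
      qed
      hence m3: "3 \<le> m" by auto
      have "lo * rho j \<le> rho 1" using j TS by simp
      hence c1: "rho j \<le> rho 1 / lo" using lo0 by (simp add: field_simps)
      define k1 where "k1 = card {i\<in>{1..m}. rho j < rho i}"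
      have sub1: "{i\<in>{1..m}. rho j < rho i} \<subset> S0" using rj j S0_def by auto
      have "k1 < k0" unfolding k1_def k0_def by (rule psubset_card_mono[OF finS0 sub1])
      hence k1m: "k1 \<le> m - 2" using k0m by simp
      have G1: "rho m \<le> rho j * hi * gam ^ (k1 - 1) \<and> (2 \<le> k1 \<longrightarrow> rho m < rho j * hi * gam ^ (k1 - 1))"
        using chainG[of k1] r1 rj k1_def by auto
      show ?thesis
      proof (cases "k1 = 0")
        case True
        have "rho m \<le> rho j"
        proof (rule ccontr)
          assume "\<not> ?thesis"
          hence "m \<in> {i\<in>{1..m}. rho j < rho i}" using m2 by auto
          hence "0 < k1" unfolding k1_def by (auto simp: card_gt_0_iff)
          thus False using True by simp
        qed
        also have "\<dots> \<le> rho 1 * (1 / lo)" using c1 by simp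
        also have "\<dots> \<le> rho 1 * gam" using inv_lo_le_gam r1 by (intro mult_left_mono) auto
        finally have A: "rho m \<le> gam * rho 1" by (simp add: mult.commute)
        have "gam * rho 1 \<le> gam ^ (m - 2) * rho 1" using pw[of 1 "m-2"] m3 r1 by simp
        moreover have "4 \<le> m \<Longrightarrow> gam * rho 1 < gam ^ (m - 2) * rho 1" using pws[of 1 "m-2"] r1 by simp
        ultimately show ?thesis using A by auto
      next
        case False
        hence k11: "1 \<le> k1" by simp
        have "rho j * hi * gam ^ (k1 - 1) \<le> rho 1 / lo * hi * gam ^ (k1 - 1)"
          using c1 hi1 gam1 by (intro mult_right_mono) auto
        also have "\<dots> = rho 1 * (gam * gam ^ (k1 - 1))" by (simp add: gam_def)
        also have "\<dots> = rho 1 * gam ^ k1" by (simp only: gam_pow_Suc[OF k11])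
        finally have B: "rho j * hi * gam ^ (k1 - 1) \<le> rho 1 * gam ^ k1" .
        have C: "rho 1 * gam ^ k1 \<le> rho 1 * gam ^ (m - 2)" using pw[OF k1m] r1 by simp
        have D: "4 \<le> m \<Longrightarrow> rho m < rho 1 * gam ^ (m - 2)"
        proof (cases "2 \<le> k1")
          case True thus ?thesis using G1 B C by auto
        next
          case False
          assume m4: "4 \<le> m"
          hence "k1 = 1" "1 < m - 2" using False k11 by auto
          hence "gam ^ k1 < gam ^ (m - 2)" using pws[of 1 "m-2"] by simp
          hence "rho 1 * gam ^ k1 < rho 1 * gam ^ (m - 2)" using r1 by simp
          thus ?thesis using G1 B by auto
        qed
        show ?thesis using G1 B C D by (auto simp: mult.commute)
      qed
    qed
  qed
qed

lemma ratio_final: "wH m * wL 1 \<le> gam ^ (m - 2) * wH 1 * wL m \<and>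
   (4 \<le> m \<longrightarrow> wH m * wL 1 < gam ^ (m - 2) * wH 1 * wL m)"
proof -
  have e: "wH m * wL 1 = rho m * (wL m * wL 1)" "gam ^ (m - 2) * wH 1 * wL m = gam ^ (m - 2) * rho 1 * (wL m * wL 1)"
    using rho_eq[of m] rho_eq[of 1] m2 by (auto simp: algebra_simps)
  have p: "0 < wL m * wL 1" using wL1 wLm by simp
  show ?thesis unfolding e using rho_main p by (auto intro: mult_right_mono mult_strict_right_mono)
qed

end


locale mc =
  fixes m :: nat and p :: "'s::finite \<Rightarrow> real" and f :: "nat \<Rightarrow> 's \<Rightarrow> nat \<Rightarrow> real" and g :: "nat \<Rightarrow> real"
  assumes p: "is_signal_dist p"
  and fv: "\<forall>i\<in>{1..m}. \<forall>s. (\<forall>j\<in>{1..m}. f i s j \<ge> 0) \<and> (\<Sum>j\<in>{1..m}. f i s j) = 1"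
  and g0: "\<forall>i\<in>{1..m}. g i \<ge> 0" and g1: "(\<Sum>i\<in>{1..m}. g i) = 1"
  and m2: "2 \<le> m"
  and ab1: "\<forall>s. f 1 s 1 = 1" and abm: "\<forall>s. f m s m = 1"
  and reach: "\<forall>i\<in>{1..m}. (edge m p f)\<^sup>*\<^sup>* i 1 \<or> (edge m p f)\<^sup>*\<^sup>* i m"
begin

abbreviation "D n j \<equiv> state_dist m p f g n j"
abbreviation "K \<equiv> kernel p f"

lemma p_pos: "0 < p s" using p unfolding is_signal_dist_def by auto
lemma p_sum: "(\<Sum>s\<in>UNIV. p s) = 1" using p unfolding is_signal_dist_def by auto

lemma K_nonneg: "i \<in> {1..m} \<Longrightarrow> j \<in> {1..m} \<Longrightarrow> 0 \<le> K i j"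
  unfolding kernel_def using fv p_pos by (intro sum_nonneg mult_nonneg_nonneg) (auto intro: less_imp_le)

lemma K_sum: "i \<in> {1..m} \<Longrightarrow> (\<Sum>j\<in>{1..m}. K i j) = 1"
proof -
  assume i: "i \<in> {1..m}"
  have "(\<Sum>j\<in>{1..m}. K i j) = (\<Sum>s\<in>UNIV. \<Sum>j\<in>{1..m}. p s * f i s j)"
    unfolding kernel_def by (rule sum.swap)
  also have "\<dots> = (\<Sum>s\<in>UNIV. p s * (\<Sum>j\<in>{1..m}. f i s j))" by (simp add: sum_distrib_left)
  also have "\<dots> = (\<Sum>s\<in>UNIV. p s)" using fv i by simp
  finally show ?thesis using p_sum by simp
qed

lemma f_abs_zero: assumes a: "a \<in> {1,m}" and j: "j \<in> {1..m}" "j \<noteq> a" shows "f a s j = 0"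
proof -
  have aM: "a \<in> {1..m}" using a m2 by auto
  have faa: "f a s a = 1" using a ab1 abm by auto
  have "(\<Sum>j\<in>{1..m}. f a s j) = f a s a + (\<Sum>j\<in>{1..m}-{a}. f a s j)"
    using aM by (simp add: sum.remove)
  hence z: "(\<Sum>j\<in>{1..m}-{a}. f a s j) = 0" using fv aM faa by simp
  have "\<forall>j\<in>{1..m}-{a}. f a s j = 0"
    using sum_nonneg_eq_0_iff[of "{1..m}-{a}" "f a s"] z fv aM by auto
  thus ?thesis using j by auto
qed

lemma K_abs: assumes a: "a \<in> {1,m}" and j: "j \<in> {1..m}" shows "K a j = (if j = a then 1 else 0)"
proof (cases "j = a")
  case True
  have "f a s a = 1" for s using a ab1 abm by auto
  thus ?thesis using True p_sum unfolding kernel_def by simp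
next
  case False
  thus ?thesis unfolding kernel_def using f_abs_zero[OF a j False] by simp
qed

lemma D_nonneg: "j \<in> {1..m} \<Longrightarrow> 0 \<le> D n j"
proof (induction n arbitrary: j)
  case 0 thus ?case using g0 by simp
next
  case (Suc n)
  have "0 \<le> (\<Sum>i\<in>{1..m}. D n i * K i j)" using Suc K_nonneg by (intro sum_nonneg mult_nonneg_nonneg) auto
  thus ?case by simp
qed

lemma D_sum: "(\<Sum>j\<in>{1..m}. D n j) = 1"
proof (induction n)
  case 0 thus ?case using g1 by simp
next
  case (Suc n)
  have "(\<Sum>j\<in>{1..m}. D (Suc n) j) = (\<Sum>i\<in>{1..m}. \<Sum>j\<in>{1..m}. D n i * K i j)"
    by (simp only: state_dist.simps) (rule sum.swap)
  also have "\<dots> = (\<Sum>i\<in>{1..m}. D n i)" using K_sum by (simp add: sum_distrib_left[symmetric])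
  finally show ?case using Suc by simp
qed

lemma D_le1: "j \<in> {1..m} \<Longrightarrow> D n j \<le> 1"
  using member_le_sum[of j "{1..m}" "D n"] D_nonneg D_sum by auto

lemma D_ge: "i \<in> {1..m} \<Longrightarrow> j \<in> {1..m} \<Longrightarrow> D n i * K i j \<le> D (Suc n) j"
  using member_le_sum[of i "{1..m}" "\<lambda>i. D n i * K i j"] D_nonneg K_nonneg by simp

lemma D_ge2: "i \<in> {1..m} \<Longrightarrow> j \<in> {1..m} \<Longrightarrow> i \<noteq> j \<Longrightarrow> D n i * K i j + D n j * K j j \<le> D (Suc n) j"
proof -
  assume ij: "i \<in> {1..m}" "j \<in> {1..m}" "i \<noteq> j"
  have "(\<Sum>k\<in>{i,j}. D n k * K k j) \<le> (\<Sum>k\<in>{1..m}. D n k * K k j)"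
    using ij D_nonneg K_nonneg by (intro sum_mono2) auto
  thus ?thesis using ij by simp
qed

lemma D_abs_mono: "a \<in> {1,m} \<Longrightarrow> D n a \<le> D (Suc n) a"
  using D_ge[of a a n] K_abs[of a a] m2 by auto

lemma mu_conv: assumes a: "a \<in> {1,m}" shows "(\<lambda>n. D n a) \<longlonglongrightarrow> absorb_prob m p f g a"
proof -
  have inc: "incseq (\<lambda>n. D n a)" using D_abs_mono[OF a] by (rule incseq_SucI)
  have "\<forall>n. D n a \<le> 1" using D_le1 a m2 by auto
  then obtain L where L: "(\<lambda>n. D n a) \<longlonglongrightarrow> L" using incseq_convergent[OF inc] by blast
  hence "absorb_prob m p f g a = L" unfolding absorb_prob_def by (rule limI)
  thus ?thesis using L by simp
qed

lemma D_le_mu: assumes a: "a \<in> {1,m}" shows "D n a \<le> absorb_prob m p f g a"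
proof -
  have inc: "incseq (\<lambda>n. D n a)" using D_abs_mono[OF a] by (rule incseq_SucI)
  show ?thesis using incseq_le[OF inc mu_conv[OF a]] .
qed

lemma summ_aux:
  assumes "(edge m p f)\<^sup>*\<^sup>* i a" and "a \<in> {1,m}"
  shows "i \<in> {1,m} \<or> summable (\<lambda>n. D n i)"
  using assms(1)
proof (induction rule: converse_rtranclp_induct)
  case base thus ?case using assms(2) by simp
next
  case (step i j)
  show ?case
  proof (cases "i \<in> {1,m}")
    case True thus ?thesis by simp
  next
    case False
    have e: "i \<in> {1..m}" "j \<in> {1..m}" "0 < K i j" using step(1) unfolding edge_def by auto
    have Dn: "\<And>n. 0 \<le> D n i" using D_nonneg e by simp
    show ?thesis
    proof (cases "j \<in> {1,m}")
      case True
      have ij: "i \<noteq> j" using True False by auto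
      have Kjj: "K j j = 1" using K_abs[OF True e(2)] by simp
      have bd: "D n i \<le> (D (Suc n) j - D n j) / K i j" for n
        using D_ge2[OF e(1) e(2) ij, of n] Kjj e(3) by (simp add: field_simps)
      have "summable (\<lambda>n. D n i)"
      proof (rule summableI_nonneg_bounded)
        show "0 \<le> D n i" for n by (rule Dn)
        fix N
        have "(\<Sum>n<N. D n i) \<le> (\<Sum>n<N. (D (Suc n) j - D n j) / K i j)"
          using bd by (intro sum_mono) auto
        also have "\<dots> = (D N j - D 0 j) / K i j"
          by (simp only: sum_divide_distrib[symmetric] sum_lessThan_telescope[of "\<lambda>n. D n j"])
        also have "\<dots> \<le> 1 / K i j"
          using D_le1[OF e(2), of N] D_nonneg[OF e(2), of 0] e(3) by (intro divide_right_mono) auto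
        finally show "(\<Sum>n<N. D n i) \<le> 1 / K i j" .
      qed
      thus ?thesis by simp
    next
      case False
      hence sj: "summable (\<lambda>n. D n j)" using step(3) by simp
      have "summable (\<lambda>n. D (Suc n) j / K i j)"
        using summable_Suc_iff[of "\<lambda>n. D n j", THEN iffD2, OF sj] by (rule summable_divide)
      moreover have "norm (D n i) \<le> D (Suc n) j / K i j" for n
        using D_ge[OF e(1) e(2), of n] e(3) Dn[of n] by (simp add: field_simps)
      ultimately have "summable (\<lambda>n. D n i)" by (rule summable_comparison_test')
      thus ?thesis by simp
    qed
  qed
qed

lemma summ: "i \<in> {1..m} - {1,m} \<Longrightarrow> summable (\<lambda>n. D n i)"
  using reach summ_aux by blast

lemma D_T_zero: "i \<in> {1..m} - {1,m} \<Longrightarrow> (\<lambda>n. D n i) \<longlonglongrightarrow> 0"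
  using summ summable_LIMSEQ_zero by blast

definition L :: "nat \<Rightarrow> real" where "L j = (if j \<in> {1,m} then absorb_prob m p f g j else 0)"

lemma D_conv: "j \<in> {1..m} \<Longrightarrow> (\<lambda>n. D n j) \<longlonglongrightarrow> L j"
  unfolding L_def using mu_conv D_T_zero by auto

lemma L_sum: "S \<subseteq> {1..m} \<Longrightarrow> (\<Sum>j\<in>S. L j) = (\<Sum>j\<in>S \<inter> {1,m}. absorb_prob m p f g j)"
proof -
  assume S: "S \<subseteq> {1..m}"
  have fin: "finite S" using S finite_subset by blast
  show ?thesis unfolding L_def using sum.inter_restrict[OF fin, of "absorb_prob m p f g" "{1,m}"]
    by simp
qed

lemma mu_sum: "absorb_prob m p f g 1 + absorb_prob m p f g m = 1"
proof -
  have "(\<lambda>n. \<Sum>j\<in>{1..m}. D n j) \<longlonglongrightarrow> (\<Sum>j\<in>{1..m}. L j)"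
    using D_conv by (intro tendsto_sum) auto
  moreover have "(\<lambda>n. \<Sum>j\<in>{1..m}. D n j) = (\<lambda>n. 1)" using D_sum by simp
  ultimately have "(\<lambda>n. 1::real) \<longlonglongrightarrow> (\<Sum>j\<in>{1..m}. L j)" by simp
  hence "(\<Sum>j\<in>{1..m}. L j) = 1" using LIMSEQ_unique tendsto_const by blast
  moreover have "{1..m} \<inter> {1,m} = {1, m}" using m2 by auto
  ultimately show ?thesis using L_sum[of "{1..m}"] m2 by simp
qed

definition w :: "nat \<Rightarrow> real" where
  "w i = (if i = 1 \<or> i = m then absorb_prob m p f g i else suminf (\<lambda>n. D n i))"

lemma step_id:
  assumes S: "S \<subseteq> {1..m}" "m \<in> S" "1 \<notin> S"
  shows "(\<Sum>j\<in>S. D (Suc n) j) - (\<Sum>j\<in>S. D n j) =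
    (\<Sum>i\<in>({1..m}-{1,m})-S. \<Sum>j\<in>S. D n i * K i j) - (\<Sum>i\<in>({1..m}-{1,m})\<inter>S. \<Sum>j\<in>{1..m}-S. D n i * K i j)"
proof -
  have finS: "finite S" using S(1) finite_subset by blast
  have A: "(\<Sum>j\<in>S. D (Suc n) j) = (\<Sum>i\<in>{1..m}. \<Sum>j\<in>S. D n i * K i j)"
    by (simp only: state_dist.simps) (rule sum.swap)
  have B: "(\<Sum>i\<in>{1..m}. \<Sum>j\<in>S. D n i * K i j) = (\<Sum>i\<in>{1..m}-S. \<Sum>j\<in>S. D n i * K i j) + (\<Sum>i\<in>S. \<Sum>j\<in>S. D n i * K i j)"
    using S(1) by (simp add: sum.subset_diff)
  have C: "(\<Sum>j\<in>S. D n i * K i j) = D n i - (\<Sum>j\<in>{1..m}-S. D n i * K i j)" if i: "i \<in> S" for i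
  proof -
    have "(\<Sum>j\<in>{1..m}. K i j) = (\<Sum>j\<in>{1..m}-S. K i j) + (\<Sum>j\<in>S. K i j)"
      using S(1) by (simp add: sum.subset_diff)
    hence "(\<Sum>j\<in>S. K i j) = 1 - (\<Sum>j\<in>{1..m}-S. K i j)" using K_sum i S(1) by auto
    hence "D n i * (\<Sum>j\<in>S. K i j) = D n i - D n i * (\<Sum>j\<in>{1..m}-S. K i j)" by (simp add: right_diff_distrib)
    thus ?thesis by (simp add: sum_distrib_left)
  qed
  have C2: "(\<Sum>i\<in>S. \<Sum>j\<in>S. D n i * K i j) = (\<Sum>i\<in>S. D n i) - (\<Sum>i\<in>S. \<Sum>j\<in>{1..m}-S. D n i * K i j)"
    using C by (simp add: sum_subtractf)
  have Dz: "(\<Sum>i\<in>S. \<Sum>j\<in>{1..m}-S. D n i * K i j) = (\<Sum>i\<in>({1..m}-{1,m})\<inter>S. \<Sum>j\<in>{1..m}-S. D n i * K i j)"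
  proof (rule sum.mono_neutral_right[OF finS])
    show "({1..m}-{1,m})\<inter>S \<subseteq> S" by auto
    show "\<forall>i\<in>S - ({1..m}-{1,m})\<inter>S. (\<Sum>j\<in>{1..m}-S. D n i * K i j) = 0"
    proof
      fix i assume "i \<in> S - ({1..m}-{1,m})\<inter>S"
      hence im: "i = m" using S by auto
      have "\<forall>j\<in>{1..m}-S. K m j = 0" using K_abs[of m] S(2) by auto
      thus "(\<Sum>j\<in>{1..m}-S. D n i * K i j) = 0" using im by simp
    qed
  qed
  have Ez: "(\<Sum>i\<in>{1..m}-S. \<Sum>j\<in>S. D n i * K i j) = (\<Sum>i\<in>({1..m}-{1,m})-S. \<Sum>j\<in>S. D n i * K i j)"
  proof (rule sum.mono_neutral_right)
    show "finite ({1..m}-S)" by simp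
    show "({1..m}-{1,m})-S \<subseteq> {1..m}-S" by auto
    show "\<forall>i\<in>({1..m}-S) - (({1..m}-{1,m})-S). (\<Sum>j\<in>S. D n i * K i j) = 0"
    proof
      fix i assume "i \<in> ({1..m}-S) - (({1..m}-{1,m})-S)"
      hence im: "i = 1" using S by auto
      have "\<forall>j\<in>S. K 1 j = 0" using K_abs[of 1] S by auto
      thus "(\<Sum>j\<in>S. D n i * K i j) = 0" using im by simp
    qed
  qed
  show ?thesis using A B C2 Dz Ez by simp
qed

lemma balance:
  assumes S: "S \<subseteq> {1..m}" "m \<in> S" "1 \<notin> S"
  shows "OUTf m g w K S = INf m g w K S"
proof -
  define X where "X n = (\<Sum>j\<in>S. D n j)" for n
  have finS: "finite S" using S(1) finite_subset by blast
  have "X \<longlonglongrightarrow> (\<Sum>j\<in>S. L j)" unfolding X_def using D_conv S(1) by (intro tendsto_sum) auto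
  moreover have "S \<inter> {1,m} = {m}" using S by auto
  ultimately have Xl: "X \<longlonglongrightarrow> absorb_prob m p f g m" using L_sum[OF S(1)] by simp
  have t1: "(\<lambda>n. X (Suc n) - X n) sums (absorb_prob m p f g m - sum g S)"
    using telescope_sums[OF Xl] unfolding X_def by simp
  define inT where "inT = (\<Sum>i\<in>({1..m}-{1,m})-S. \<Sum>j\<in>S. w i * K i j)"
  define outT where "outT = (\<Sum>i\<in>({1..m}-{1,m})\<inter>S. \<Sum>j\<in>{1..m}-S. w i * K i j)"
  have si: "(\<lambda>n. D n i * K i j) sums (w i * K i j)" if i: "i \<in> {1..m}-{1,m}" for i j
  proof -
    have "(\<lambda>n. D n i) sums (w i)" using summable_sums[OF summ[OF i]] i unfolding w_def by auto
    thus ?thesis by (rule sums_mult2)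
  qed
  have t2: "(\<lambda>n. (\<Sum>i\<in>({1..m}-{1,m})-S. \<Sum>j\<in>S. D n i * K i j) - (\<Sum>i\<in>({1..m}-{1,m})\<inter>S. \<Sum>j\<in>{1..m}-S. D n i * K i j))
      sums (inT - outT)"
    unfolding inT_def outT_def using si by (intro sums_diff sums_sum) auto
  have "(\<lambda>n. X (Suc n) - X n) = (\<lambda>n. (\<Sum>i\<in>({1..m}-{1,m})-S. \<Sum>j\<in>S. D n i * K i j) - (\<Sum>i\<in>({1..m}-{1,m})\<inter>S. \<Sum>j\<in>{1..m}-S. D n i * K i j))"
    unfolding X_def using step_id[OF S] by simp
  hence eq: "absorb_prob m p f g m - sum g S = inT - outT" using t1 t2 sums_unique2 by metis
  have gs: "sum g ({1..m}-S) = 1 - sum g S" using g1 S(1) by (simp add: sum.subset_diff)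
  have w1: "w 1 = absorb_prob m p f g 1" and wm: "w m = absorb_prob m p f g m" unfolding w_def by auto
  have "OUTf m g w K S = outT + absorb_prob m p f g m * (1 - sum g S)"
    unfolding OUTf_def outT_def gs wm ..
  moreover have "INf m g w K S = inT + absorb_prob m p f g 1 * sum g S"
    unfolding INf_def inT_def w1 ..
  moreover have "sum g S * absorb_prob m p f g 1 + sum g S * absorb_prob m p f g m = sum g S"
    using mu_sum by (metis distrib_left mult_1_right)
  moreover have "absorb_prob m p f g m * (1 - sum g S) = absorb_prob m p f g m - sum g S * absorb_prob m p f g m"
    by (simp add: algebra_simps)
  moreover have "absorb_prob m p f g 1 * sum g S = sum g S * absorb_prob m p f g 1" by simp
  ultimately show ?thesis using eq by linarith
qed

lemma w_nonneg: "i \<in> {1..m} \<Longrightarrow> 0 \<le> w i"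
proof -
  assume i: "i \<in> {1..m}"
  show ?thesis
  proof (cases "i = 1 \<or> i = m")
    case True
    hence "D 0 i \<le> absorb_prob m p f g i" using D_le_mu[of i 0] by blast
    thus ?thesis using D_nonneg[OF i, of 0] True unfolding w_def by auto
  next
    case False
    hence "summable (\<lambda>n. D n i)" using summ i by auto
    thus ?thesis using False D_nonneg[OF i] unfolding w_def by (simp add: suminf_nonneg)
  qed
qed

lemma w_pos_iff: "i \<in> {1..m} \<Longrightarrow> 0 < w i \<longleftrightarrow> (\<exists>n. 0 < D n i)"
proof -
  assume i: "i \<in> {1..m}"
  show ?thesis
  proof (cases "i = 1 \<or> i = m")
    case True
    hence a: "i \<in> {1,m}" by auto
    have wi: "w i = absorb_prob m p f g i" using True unfolding w_def by auto
    show ?thesis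
    proof
      assume pos: "0 < w i"
      show "\<exists>n. 0 < D n i"
      proof (rule ccontr)
        assume "\<not> ?thesis"
        hence "\<forall>n. D n i = 0" using D_nonneg[OF i] by (meson not_less order_antisym)
        hence "(\<lambda>n. D n i) = (\<lambda>n. 0)" by auto
        hence "(\<lambda>n. 0::real) \<longlonglongrightarrow> absorb_prob m p f g i" using mu_conv[OF a] by simp
        hence "absorb_prob m p f g i = 0" using LIMSEQ_unique tendsto_const by blast
        thus False using pos wi by simp
      qed
    next
      assume "\<exists>n. 0 < D n i"
      then obtain n where "0 < D n i" by blast
      thus "0 < w i" using D_le_mu[OF a, of n] wi by simp
    qed
  next
    case False
    hence "summable (\<lambda>n. D n i)" using summ i by auto
    moreover have "w i = suminf (\<lambda>n. D n i)" using False unfolding w_def by auto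
    ultimately show ?thesis using suminf_pos_iff[of "\<lambda>n. D n i"] D_nonneg[OF i] by simp
  qed
qed

end


lemma kernel_pos_iff:
  assumes p: "is_signal_dist p" and fn: "\<forall>s. 0 \<le> f i s j"
  shows "0 < kernel p f i j \<longleftrightarrow> (\<exists>s. 0 < f i s j)"
proof -
  have pp: "\<And>s. 0 < p s" using p unfolding is_signal_dist_def by auto
  have nn: "\<And>s. 0 \<le> p s * f i s j" using pp fn by (simp add: less_imp_le)
  have "kernel p f i j \<noteq> 0 \<longleftrightarrow> (\<exists>s. p s * f i s j \<noteq> 0)"
    unfolding kernel_def using sum_nonneg_eq_0_iff[of UNIV "\<lambda>s. p s * f i s j"] nn by auto
  moreover have "0 \<le> kernel p f i j" unfolding kernel_def using nn by (simp add: sum_nonneg)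
  moreover have "\<And>s. p s * f i s j \<noteq> 0 \<longleftrightarrow> 0 < f i s j" using pp fn
    by (metis less_eq_real_def mult_eq_0_iff mult_pos_pos not_less_iff_gr_or_eq)
  ultimately show ?thesis by (auto simp: less_le)
qed

lemma absorb_f:
  assumes p: "is_signal_dist p"
  and fv: "\<forall>i\<in>{1..m}. \<forall>s. (\<forall>j\<in>{1..m}. f i s j \<ge> 0) \<and> (\<Sum>j\<in>{1..m}. f i s j) = 1"
  and ab: "absorbing m p f a"
  shows "\<forall>s. f a s a = 1"
proof
  fix s0
  have aM: "a \<in> {1..m}" and k: "kernel p f a a = 1" using ab unfolding absorbing_def by auto
  have pp: "\<And>s. 0 < p s" and ps: "(\<Sum>s\<in>UNIV. p s) = 1" using p unfolding is_signal_dist_def by auto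
  have le1: "\<And>s. f a s a \<le> 1"
    using member_le_sum[of a "{1..m}" "f a s" for s] fv aM by auto
  have "(\<Sum>s\<in>UNIV. p s * (1 - f a s a)) = (\<Sum>s\<in>UNIV. p s) - kernel p f a a"
    unfolding kernel_def by (simp add: sum_subtractf right_diff_distrib)
  hence z: "(\<Sum>s\<in>UNIV. p s * (1 - f a s a)) = 0" using k ps by simp
  have nn: "\<forall>s\<in>UNIV. 0 \<le> p s * (1 - f a s a)" using pp le1 by (simp add: less_imp_le)
  hence "p s0 * (1 - f a s0 a) = 0" using sum_nonneg_eq_0_iff[of UNIV "\<lambda>s. p s * (1 - f a s a)"] z by simp
  thus "f a s0 a = 1" using pp[of s0] by simp
qed

lemma min_reach:
  fixes E :: "nat \<Rightarrow> nat \<Rightarrow> bool"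
  assumes cl: "\<And>x y. E x y \<Longrightarrow> y \<in> M" and fin: "finite M"
  and tr: "\<And>i. i \<in> M \<Longrightarrow> \<not> A i \<Longrightarrow> (\<exists>j. E\<^sup>*\<^sup>* i j \<and> \<not> E\<^sup>*\<^sup>* j i)"
  and i: "i \<in> M"
  shows "\<exists>a. A a \<and> E\<^sup>*\<^sup>* i a"
proof -
  define R where "R x = {y. E\<^sup>*\<^sup>* x y}" for x
  have RM: "x \<in> M \<Longrightarrow> R x \<subseteq> M" for x
  proof
    fix y assume x: "x \<in> M" and "y \<in> R x"
    hence "E\<^sup>*\<^sup>* x y" unfolding R_def by auto
    thus "y \<in> M" using x by (induction rule: rtranclp_induct) (auto intro: cl)
  qed
  obtain j where j: "E\<^sup>*\<^sup>* i j" and jmin: "\<And>y. E\<^sup>*\<^sup>* i y \<Longrightarrow> card (R j) \<le> card (R y)"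
    using ex_has_least_nat[of "\<lambda>y. E\<^sup>*\<^sup>* i y" i "\<lambda>y. card (R y)"] by auto
  have jM: "j \<in> M" using RM[OF i] j unfolding R_def by auto
  show ?thesis
  proof (cases "A j")
    case True thus ?thesis using j by blast
  next
    case False
    then obtain k where k: "E\<^sup>*\<^sup>* j k" "\<not> E\<^sup>*\<^sup>* k j" using tr jM by blast
    have "R k \<subseteq> R j" unfolding R_def using k(1) by auto
    moreover have "j \<in> R j - R k" unfolding R_def using k(2) by auto
    ultimately have "R k \<subset> R j" by blast
    moreover have "finite (R j)" using RM[OF jM] fin finite_subset by blast
    ultimately have "card (R k) < card (R j)" by (rule psubset_card_mono[rotated])
    moreover have "card (R j) \<le> card (R k)" using jmin[OF rtranclp_trans[OF j k(1)]] .
    ultimately show ?thesis by simp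
  qed
qed

lemma lohi:
  fixes pH pL :: "'s::finite \<Rightarrow> real"
  assumes H: "is_signal_dist pH" and L: "is_signal_dist pL" and ne: "pH \<noteq> pL"
  shows "0 < Min (range (\<lambda>s. pH s / pL s)) \<and> Min (range (\<lambda>s. pH s / pL s)) < 1 \<and> 1 < Max (range (\<lambda>s. pH s / pL s))"
proof -
  let ?r = "\<lambda>s. pH s / pL s"
  have pH: "\<And>s. 0 < pH s" "sum pH UNIV = 1" and pL: "\<And>s. 0 < pL s" "sum pL UNIV = 1"
    using H L unfolding is_signal_dist_def by auto
  have fin: "finite (range ?r)" by simp
  have ne': "range ?r \<noteq> {}" by simp
  have "Min (range ?r) \<in> range ?r" by (rule Min_in[OF fin ne'])
  then obtain s0 where s0: "Min (range ?r) = ?r s0" by blast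
  have pos: "0 < Min (range ?r)" using s0 pH pL by simp
  have lo: "Min (range ?r) < 1"
  proof (rule ccontr)
    assume "\<not> ?thesis"
    hence "\<forall>s. 1 \<le> ?r s" using Min_le[OF fin] by (meson le_less_trans not_less rangeI)
    hence le: "\<forall>s\<in>UNIV. pL s \<le> pH s" using pL by (simp add: le_divide_eq)
    obtain s1 where "pH s1 \<noteq> pL s1" using ne by blast
    moreover have "pL s1 \<le> pH s1" using le by simp
    ultimately have "pL s1 < pH s1" by simp
    hence "sum pL UNIV < sum pH UNIV" using le by (intro sum_strict_mono_ex1) auto
    thus False using pH pL by simp
  qed
  have hi: "1 < Max (range ?r)"
  proof (rule ccontr)
    assume "\<not> ?thesis"
    hence "\<forall>s. ?r s \<le> 1" using Max_ge[OF fin] by (meson order_trans not_less rangeI)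
    hence le: "\<forall>s\<in>UNIV. pH s \<le> pL s" using pL by (simp add: divide_le_eq)
    obtain s1 where "pH s1 \<noteq> pL s1" using ne by blast
    moreover have "pH s1 \<le> pL s1" using le by simp
    ultimately have "pH s1 < pL s1" by simp
    hence "sum pH UNIV < sum pL UNIV" using le by (intro sum_strict_mono_ex1) auto
    thus False using pH pL by simp
  qed
  show ?thesis using pos lo hi by simp
qed

lemma kbound:
  fixes pH pL :: "'s::finite \<Rightarrow> real"
  assumes H: "is_signal_dist pH" and L: "is_signal_dist pL" and fn: "\<forall>s. 0 \<le> f i s j"
  shows "Min (range (\<lambda>s. pH s / pL s)) * kernel pL f i j \<le> kernel pH f i j \<and>
         kernel pH f i j \<le> Max (range (\<lambda>s. pH s / pL s)) * kernel pL f i j"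
proof -
  let ?r = "\<lambda>s. pH s / pL s"
  have pL: "\<And>s. 0 < pL s" using L unfolding is_signal_dist_def by auto
  have fin: "finite (range ?r)" by simp
  have e: "kernel pH f i j = (\<Sum>s\<in>UNIV. ?r s * (pL s * f i s j))"
    unfolding kernel_def using pL by (intro sum.cong) (auto simp: field_simps less_imp_neq[symmetric])
  have nn: "\<And>s. 0 \<le> pL s * f i s j" using pL fn by (simp add: less_imp_le)
  have "Min (range ?r) * kernel pL f i j = (\<Sum>s\<in>UNIV. Min (range ?r) * (pL s * f i s j))"
    unfolding kernel_def by (simp add: sum_distrib_left)
  also have "\<dots> \<le> (\<Sum>s\<in>UNIV. ?r s * (pL s * f i s j))"
    using Min_le[OF fin] nn by (intro sum_mono mult_right_mono) auto
  finally have 1: "Min (range ?r) * kernel pL f i j \<le> kernel pH f i j" using e by simp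
  have "(\<Sum>s\<in>UNIV. ?r s * (pL s * f i s j)) \<le> (\<Sum>s\<in>UNIV. Max (range ?r) * (pL s * f i s j))"
    using Max_ge[OF fin] nn by (intro sum_mono mult_right_mono) auto
  also have "\<dots> = Max (range ?r) * kernel pL f i j"
    unfolding kernel_def by (simp add: sum_distrib_left)
  finally have 2: "kernel pH f i j \<le> Max (range ?r) * kernel pL f i j" using e by simp
  show ?thesis using 1 2 by simp
qed

lemma pos_sum_iff: "finite A \<Longrightarrow> (\<And>x. x \<in> A \<Longrightarrow> 0 \<le> h x) \<Longrightarrow> 0 < sum h A \<longleftrightarrow> (\<exists>x\<in>A. 0 < (h x::real))"
proof -
  assume fin: "finite A" and nn: "\<And>x. x \<in> A \<Longrightarrow> 0 \<le> h x"
  have "sum h A \<noteq> 0 \<longleftrightarrow> (\<exists>x\<in>A. h x \<noteq> 0)" using sum_nonneg_eq_0_iff[OF fin] nn by blast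
  moreover have "0 \<le> sum h A" using nn by (simp add: sum_nonneg)
  ultimately show ?thesis using nn by (auto simp: less_le)
qed

lemma pos_mult_iff_nn: "0 \<le> (a::real) \<Longrightarrow> 0 \<le> b \<Longrightarrow> 0 < a*b \<longleftrightarrow> 0<a \<and> 0<b"
  by (auto simp: zero_less_mult_iff)

theorem lemma4:
  fixes piH piL :: "'s::finite \<Rightarrow> real"
    and m :: nat
    and f :: "nat \<Rightarrow> 's \<Rightarrow> nat \<Rightarrow> real"
    and g a :: "nat \<Rightarrow> real"
  assumes "is_signal_dist piH" and "is_signal_dist piL" and "piH \<noteq> piL"
    and "valid_protocol m f g a"
    and "parsimonious m piH f a"
    and "absorbing m piH f 1" and "a 1 = 0"
    and "absorbing m piH f m" and "a m = 1"
  shows "absorb_prob m piH f g m * absorb_prob m piL f g 1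
           \<le> gamma piH piL ^ (m - 2) * absorb_prob m piH f g 1 * absorb_prob m piL f g m \<and>
         (m \<ge> 4 \<longrightarrow> absorb_prob m piH f g 1 \<noteq> 0 \<longrightarrow> absorb_prob m piH f g m \<noteq> 0 \<longrightarrow>
         absorb_prob m piL f g 1 \<noteq> 0 \<longrightarrow> absorb_prob m piL f g m \<noteq> 0 \<longrightarrow>
         absorb_prob m piH f g m * absorb_prob m piL f g 1
           < gamma piH piL ^ (m - 2) * absorb_prob m piH f g 1 * absorb_prob m piL f g m)"
proof -
  note pH = assms(1) and pL = assms(2)
  have fv: "\<forall>i\<in>{1..m}. \<forall>s. (\<forall>j\<in>{1..m}. f i s j \<ge> 0) \<and> (\<Sum>j\<in>{1..m}. f i s j) = 1"
    and g0: "\<forall>i\<in>{1..m}. g i \<ge> 0" and g1: "(\<Sum>i\<in>{1..m}. g i) = 1"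
    using assms(4) unfolding valid_protocol_def by auto
  have m1: "1 \<in> {1..m}" using assms(6) unfolding absorbing_def by auto
  have "(1::nat) \<noteq> m" using assms(7,9) by auto
  hence m2: "2 \<le> m" using m1 by auto
  have ab1: "\<forall>s. f 1 s 1 = 1" by (rule absorb_f[OF pH fv assms(6)])
  have abm: "\<forall>s. f m s m = 1" by (rule absorb_f[OF pH fv assms(8)])
  obtain i0 i1 where ii: "i0 \<noteq> i1" "{i\<in>{1..m}. absorbing m piH f i} = {i0, i1}"
    and tr: "\<forall>i\<in>{1..m}. \<not> absorbing m piH f i \<longrightarrow> transient m piH f i \<and> a i = 0"
    using assms(5) unfolding parsimonious_def by blast
  have "1 \<in> {i0, i1}" "m \<in> {i0, i1}" using ii(2) assms(6,8) unfolding absorbing_def by blast+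
  hence i01: "{i0, i1} = {1, m}" using ii(1) \<open>1 \<noteq> m\<close> by auto
  have abs_only: "\<And>i. absorbing m piH f i \<Longrightarrow> i = 1 \<or> i = m"
  proof -
    fix i assume "absorbing m piH f i"
    hence "i \<in> {i\<in>{1..m}. absorbing m piH f i}" unfolding absorbing_def by auto
    thus "i = 1 \<or> i = m" using ii(2) i01 by auto
  qed
  have reachH: "\<forall>i\<in>{1..m}. (edge m piH f)\<^sup>*\<^sup>* i 1 \<or> (edge m piH f)\<^sup>*\<^sup>* i m"
  proof
    fix i assume i: "i \<in> {1..m}"
    have "\<exists>a. absorbing m piH f a \<and> (edge m piH f)\<^sup>*\<^sup>* i a"
    proof (rule min_reach[where M = "{1..m}"])
      show "\<And>x y. edge m piH f x y \<Longrightarrow> y \<in> {1..m}" unfolding edge_def by auto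
      show "\<And>i. i \<in> {1..m} \<Longrightarrow> \<not> absorbing m piH f i \<Longrightarrow> \<exists>j. (edge m piH f)\<^sup>*\<^sup>* i j \<and> \<not> (edge m piH f)\<^sup>*\<^sup>* j i"
        using tr unfolding transient_def by blast
    qed (use i in auto)
    thus "(edge m piH f)\<^sup>*\<^sup>* i 1 \<or> (edge m piH f)\<^sup>*\<^sup>* i m" using abs_only by blast
  qed
  have fnn: "\<And>i j s. i \<in> {1..m} \<Longrightarrow> j \<in> {1..m} \<Longrightarrow> 0 \<le> f i s j" using fv by auto
  have Kpos: "\<And>i j. i \<in> {1..m} \<Longrightarrow> j \<in> {1..m} \<Longrightarrow> 0 < kernel piH f i j \<longleftrightarrow> 0 < kernel piL f i j"
  proof -
    fix i j assume ij: "i \<in> {1..m}" "j \<in> {1..m}"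
    have "\<forall>s. 0 \<le> f i s j" using fnn ij by auto
    thus "0 < kernel piH f i j \<longleftrightarrow> 0 < kernel piL f i j"
      using kernel_pos_iff[OF pH] kernel_pos_iff[OF pL] by blast
  qed
  have edge_eq: "edge m piL f = edge m piH f"
    by (intro ext) (auto simp: edge_def Kpos)
  interpret H: mc m piH f g
    by (unfold_locales) (use pH fv g0 g1 m2 ab1 abm reachH in auto)
  interpret L: mc m piL f g
    by (unfold_locales) (use pL fv g0 g1 m2 ab1 abm reachH edge_eq in auto)
  have Dsupp: "\<forall>j\<in>{1..m}. 0 < state_dist m piH f g n j \<longleftrightarrow> 0 < state_dist m piL f g n j" for n
  proof (induction n)
    case 0 thus ?case by simp
  next
    case (Suc n)
    show ?case
    proof
      fix j assume j: "j \<in> {1..m}"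
      have pmH: "\<And>i. i \<in> {1..m} \<Longrightarrow> (0 < state_dist m piH f g n i * kernel piH f i j) \<longleftrightarrow> (0 < state_dist m piH f g n i \<and> 0 < kernel piH f i j)"
        by (rule pos_mult_iff_nn[OF H.D_nonneg H.K_nonneg[OF _ j]])
      have pmL: "\<And>i. i \<in> {1..m} \<Longrightarrow> (0 < state_dist m piL f g n i * kernel piL f i j) \<longleftrightarrow> (0 < state_dist m piL f g n i \<and> 0 < kernel piL f i j)"
        by (rule pos_mult_iff_nn[OF L.D_nonneg L.K_nonneg[OF _ j]])
      have "0 < state_dist m piH f g (Suc n) j \<longleftrightarrow> (\<exists>i\<in>{1..m}. 0 < state_dist m piH f g n i * kernel piH f i j)"
        using pos_sum_iff[of "{1..m}" "\<lambda>i. state_dist m piH f g n i * kernel piH f i j"] H.D_nonneg H.K_nonneg j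
        by simp
      also have "\<dots> \<longleftrightarrow> (\<exists>i\<in>{1..m}. 0 < state_dist m piH f g n i \<and> 0 < kernel piH f i j)"
        using pmH by auto
      also have "\<dots> \<longleftrightarrow> (\<exists>i\<in>{1..m}. 0 < state_dist m piL f g n i \<and> 0 < kernel piL f i j)"
        using Suc Kpos j by auto
      also have "\<dots> \<longleftrightarrow> (\<exists>i\<in>{1..m}. 0 < state_dist m piL f g n i * kernel piL f i j)"
        using pmL by auto
      also have "\<dots> \<longleftrightarrow> 0 < state_dist m piL f g (Suc n) j"
        using pos_sum_iff[of "{1..m}" "\<lambda>i. state_dist m piL f g n i * kernel piL f i j"] L.D_nonneg L.K_nonneg j
        by simp
      finally show "0 < state_dist m piH f g (Suc n) j \<longleftrightarrow> 0 < state_dist m piL f g (Suc n) j" .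
    qed
  qed
  have wsupp: "\<forall>i\<in>{1..m}. 0 < H.w i \<longleftrightarrow> 0 < L.w i"
    using H.w_pos_iff L.w_pos_iff Dsupp by auto
  have wH1: "H.w 1 = absorb_prob m piH f g 1" and wHm: "H.w m = absorb_prob m piH f g m"
    and wL1: "L.w 1 = absorb_prob m piL f g 1" and wLm: "L.w m = absorb_prob m piL f g m"
    unfolding H.w_def L.w_def by auto
  define lo where "lo = Min (range (\<lambda>s. piH s / piL s))"
  define hi where "hi = Max (range (\<lambda>s. piH s / piL s))"
  have lh: "0 < lo" "lo < 1" "1 < hi" using lohi[OF pH pL assms(3)] unfolding lo_def hi_def by auto
  have gam: "gamma piH piL = hi / lo" unfolding gamma_def lo_def hi_def ..
  have nnH: "0 \<le> H.w i" "0 \<le> L.w i" if "i \<in> {1..m}" for i using H.w_nonneg L.w_nonneg that by auto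
  show ?thesis
  proof (cases "0 < L.w 1 \<and> 0 < L.w m")
    case True
    interpret R: ratio_ctx m g H.w L.w "kernel piH f" "kernel piL f" lo hi
    proof (unfold_locales)
      show "\<forall>i\<in>{1..m}-{1,m}. \<forall>j\<in>{1..m}. 0 \<le> kernel piL f i j \<and> lo * kernel piL f i j \<le> kernel piH f i j
              \<and> kernel piH f i j \<le> hi * kernel piL f i j"
        using kbound[OF pH pL] L.K_nonneg fnn unfolding lo_def hi_def by auto
      show "\<forall>S. S \<subseteq> {1..m} \<longrightarrow> m \<in> S \<longrightarrow> 1 \<notin> S \<longrightarrow> OUTf m g H.w (kernel piH f) S = INf m g H.w (kernel piH f) S"
        using H.balance by auto
      show "\<forall>S. S \<subseteq> {1..m} \<longrightarrow> m \<in> S \<longrightarrow> 1 \<notin> S \<longrightarrow> OUTf m g L.w (kernel piL f) S = INf m g L.w (kernel piL f) S"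
        using L.balance by auto
    qed (use m2 lh g0 g1 nnH wsupp True in auto)
    have "R.gam = gamma piH piL" unfolding R.gam_def gam ..
    thus ?thesis using R.ratio_final unfolding wH1 wHm wL1 wLm by simp
  next
    case False
    have mM: "m \<in> {1..m}" using m2 by auto
    have n1: "0 \<le> L.w 1" "0 \<le> H.w 1" using nnH m1 by auto
    have n2: "0 \<le> L.w m" "0 \<le> H.w m" using nnH mM by auto
    have s1: "0 < H.w 1 \<longleftrightarrow> 0 < L.w 1" using wsupp m1 by blast
    have s2: "0 < H.w m \<longleftrightarrow> 0 < L.w m" using wsupp mM by blast
    have z: "L.w 1 = 0 \<or> L.w m = 0" using False n1 n2 by linarith
    hence "(H.w 1 = 0 \<and> L.w 1 = 0) \<or> (H.w m = 0 \<and> L.w m = 0)"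
      using s1 s2 n1 n2 by linarith
    thus ?thesis unfolding wH1 wHm wL1 wLm by auto
  qed
qed

end
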